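(* Let $q$ be a prime power, $\beta$ a primitive element of $\mathbb{F}_{q^2}$, $\mathrm{Tr}(x)=x+x^q$, and $\Psi:\mathbb{F}_{q^2}^n\to\mathbb{F}_q^{2n}$, $\Psi(\alpha_0,\ldots,\alpha_{n-1})=\left(\mathrm{Tr}(\beta\alpha_0),\ldots,\mathrm{Tr}(\beta\alpha_{n-1}),\mathrm{Tr}(\beta^q\alpha_0),\ldots,\mathrm{Tr}(\beta^q\alpha_{n-1})\right)$. Let $g(x)=g_0+g_1x+\cdots+g_kx^k\in\mathbb{F}_q[x]$ be a monic divisor of $x^{2n}-1$ with $g(x)\neq x^{2n}-1$ (so $0\le k\le 2n-1$), let $\mathscr{D}=\langle g(x)\rangle$ be the $q$-ary linear cyclic code of length $2n$ generated by $g$, and let $\mathscr{C}=\Psi^{-1}(\mathscr{D})$ (an $\mathbb{F}_q$-linear additive conjucyclic code of length $n$ over $\mathbb{F}_{q^2}$). Set $V_{g(x)}=(g_0,g_1,\ldots,g_k,0,\ldots,0)\in\mathbb{F}_q^{2n}$ and $W_{g(x)}=\Psi^{-1}(V_{g(x)})\in\mathbb{F}_{q^2}^n$. Then the $2n-k$ vectors $W_{g(x)},T(W_{g(x)}),\ldots,T^{2n-k-1}(W_{g(x)})$ form an $\mathbb{F}_q$-basis of $\mathscr{C}$; i.e., the matrix with these rows is an additive generator matrix of $\mathscr{C}$.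
   Context: $T:\mathbb{F}_{q^2}^n\to\mathbb{F}_{q^2}^n$ is the conjucyclic shift $T(c_0,\ldots,c_{n-1})=(c_{n-1}^q,c_0,\ldots,c_{n-2})$. Identifying $\mathbb{F}_q^{2n}$ with $\mathbb{F}_q[x]/\langle x^{2n}-1\rangle$ via $(v_0,\ldots,v_{2n-1})\mapsto\sum v_ix^i$, $\langle g(x)\rangle$ is the ideal generated by $g$. *)

theory Defs
  imports "HOL-Computational_Algebra.Polynomial"
begin

text \<open>The ambient type 'a plays the role of F_{q^2}; F_q is its subfield of
  elements fixed by the Frobenius x |-> x^q. Vectors of length m are functions
  nat => 'a vanishing at indices >= m.\<close>

definition Fq :: "nat \<Rightarrow> 'a::field set" where
  "Fq q = {x. x ^ q = x}"

definition Tr :: "nat \<Rightarrow> 'a::field \<Rightarrow> 'a" where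
  "Tr q x = x + x ^ q"

definition vecs :: "nat \<Rightarrow> (nat \<Rightarrow> 'a::zero) set" where
  "vecs m = {v. \<forall>i\<ge>m. v i = 0}"

definition primitive_elem :: "'a::field \<Rightarrow> bool" where
  "primitive_elem b \<longleftrightarrow> b \<noteq> 0 \<and> (\<forall>x. x \<noteq> 0 \<longrightarrow> (\<exists>k::nat. x = b ^ k))"

definition Psi :: "nat \<Rightarrow> 'a::field \<Rightarrow> nat \<Rightarrow> (nat \<Rightarrow> 'a) \<Rightarrow> (nat \<Rightarrow> 'a)" where
  "Psi q b n a = (\<lambda>i. if i < n then Tr q (b * a i)
                   else if i < 2 * n then Tr q (b ^ q * a (i - n)) else 0)"

definition conjshift :: "nat \<Rightarrow> nat \<Rightarrow> (nat \<Rightarrow> 'a::field) \<Rightarrow> (nat \<Rightarrow> 'a)" where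
  "conjshift q n c = (\<lambda>i. if i = 0 then c (n - 1) ^ q else if i < n then c (i - 1) else 0)"

definition vec_poly :: "nat \<Rightarrow> (nat \<Rightarrow> 'a::comm_monoid_add) \<Rightarrow> 'a poly" where
  "vec_poly m v = (\<Sum>i<m. monom (v i) i)"

definition xm1 :: "nat \<Rightarrow> 'a::comm_ring_1 poly" where
  "xm1 m = monom 1 m - 1"

definition Fq_poly :: "nat \<Rightarrow> 'a::field poly set" where
  "Fq_poly q = {p. \<forall>i. coeff p i \<in> Fq q}"

definition cyclic_code :: "nat \<Rightarrow> nat \<Rightarrow> 'a::field poly \<Rightarrow> (nat \<Rightarrow> 'a) set" where
  "cyclic_code q m g = {v \<in> vecs m. (\<forall>i. v i \<in> Fq q) \<and>
      (\<exists>a \<in> Fq_poly q. vec_poly m v = (a * g) mod xm1 m)}"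

definition conj_code :: "nat \<Rightarrow> 'a::field \<Rightarrow> nat \<Rightarrow> 'a poly \<Rightarrow> (nat \<Rightarrow> 'a) set" where
  "conj_code q b n g = {a \<in> vecs n. Psi q b n a \<in> cyclic_code q (2 * n) g}"

definition Vg :: "nat \<Rightarrow> 'a::zero poly \<Rightarrow> (nat \<Rightarrow> 'a)" where
  "Vg m g = (\<lambda>i. if i < m then coeff g i else 0)"

definition Wg :: "nat \<Rightarrow> 'a::field \<Rightarrow> nat \<Rightarrow> 'a poly \<Rightarrow> (nat \<Rightarrow> 'a)" where
  "Wg q b n g = (THE w. w \<in> vecs n \<and> Psi q b n w = Vg (2 * n) g)"

definition Fq_span :: "nat \<Rightarrow> nat \<Rightarrow> (nat \<Rightarrow> nat \<Rightarrow> 'a::field) \<Rightarrow> (nat \<Rightarrow> 'a) set" where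
  "Fq_span q m u = {(\<lambda>i. \<Sum>j<m. c j * u j i) | c. \<forall>j<m. c j \<in> Fq q}"

definition Fq_indep :: "nat \<Rightarrow> nat \<Rightarrow> (nat \<Rightarrow> nat \<Rightarrow> 'a::field) \<Rightarrow> bool" where
  "Fq_indep q m u \<longleftrightarrow> (\<forall>c. (\<forall>j<m. c j \<in> Fq q) \<and> (\<lambda>i. \<Sum>j<m. c j * u j i) = (\<lambda>i. 0)
      \<longrightarrow> (\<forall>j<m. c j = 0))"

end

theory Submission
  imports Defs "HOL-Computational_Algebra.Primes"
begin

lemma pow_card_same:
  fixes x :: "'a :: {finite,field}"
  shows "x ^ card (UNIV :: 'a set) = x"
proof (cases "x = 0")
  case False
  have "x * (\<Prod>y\<in>UNIV-{0}. x * y) = x * x ^ (card (UNIV :: 'a set) - 1) * \<Prod>(UNIV-{0})"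
    by (simp add: prod.distrib mult_ac)
  also have "x * x ^ (card (UNIV :: 'a set) - 1) = x ^ Suc (card (UNIV :: 'a set) - 1)"
    by (subst power_Suc) auto
  also have "Suc (card (UNIV :: 'a set) - 1) = card (UNIV :: 'a set)"
    using finite_UNIV_card_ge_0[where ?'a = 'a] by simp
  also have "(\<Prod>y\<in>UNIV-{0}. x * y) = (\<Prod>y\<in>UNIV-{0}. y)"
    by (rule prod.reindex_bij_witness[of _ "\<lambda>y. y / x" "\<lambda>y. x * y"]) (use False in auto)
  finally show ?thesis
    by simp
qed (use finite_UNIV_card_ge_0[where ?'a = 'a] in auto)

lemma frob_add_gen:
  fixes x y :: "'a :: {finite,field}"
  assumes "prime p" "e > 0" "q = p ^ e" "card (UNIV :: 'a set) = q ^ 2"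
  shows "(x + y) ^ q = x ^ q + y ^ q"
proof -
  have pos: "CHAR('a) > 0" by (simp add: finite_imp_CHAR_pos)
  have pr: "prime CHAR('a)" using pos prime_CHAR_semidom by blast
  have "(\<Sum>x\<in>(UNIV::'a set). x + 1) = (\<Sum>x\<in>UNIV. x)"
    by (rule sum.reindex_bij_witness[of _ "\<lambda>y. y - 1" "\<lambda>y. y + 1"]) auto
  then have "of_nat (card (UNIV :: 'a set)) = (0::'a)"
    by (simp add: sum.distrib)
  then have "CHAR('a) dvd card (UNIV :: 'a set)" by (simp add: of_nat_eq_0_iff_char_dvd)
  then have "CHAR('a) dvd p ^ (e * 2)" using assms
    by (simp add: power_mult)
  then have "CHAR('a) dvd p" using pr prime_dvd_power by blast
  then have "CHAR('a) = p" using pr assms(1)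
    by (metis prime_nat_iff prime_gt_1_nat less_irrefl) 
  then show ?thesis using freshmans_dream'[OF pr, of q e] assms by simp
qed

locale frobset =
  fixes q :: nat and b :: "'a::{finite,field}"
  assumes q2: "q \<ge> 2"
    and fadd: "\<And>x y :: 'a. (x + y) ^ q = x ^ q + y ^ q"
    and fq2: "\<And>x :: 'a. (x ^ q) ^ q = x"
    and bne: "b ^ 2 \<noteq> b ^ (2 * q)"
    and cardU: "card (UNIV :: 'a set) = q ^ 2"
begin

lemma f0[simp]: "(0::'a) ^ q = 0" using q2 by simp
lemma fneg: "(- x :: 'a) ^ q = - (x ^ q)"
  using fadd[of x "-x"] by (simp add: eq_neg_iff_add_eq_0 add.commute)
lemma fdiff: "(x - y :: 'a) ^ q = x ^ q - y ^ q"
  using fadd[of x "-y"] fneg[of y] by simp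
lemma fsum: "(\<Sum>j\<in>A. f j :: 'a) ^ q = (\<Sum>j\<in>A. f j ^ q)"
  by (induction A rule: infinite_finite_induct) (auto simp: fadd)

lemma Fq_0[simp]: "(0::'a) \<in> Fq q" using q2 by (simp add: Fq_def)
lemma Fq_add: "(x::'a) \<in> Fq q \<Longrightarrow> y \<in> Fq q \<Longrightarrow> x + y \<in> Fq q"
  by (simp add: Fq_def fadd)
lemma Fq_mult: "(x::'a) \<in> Fq q \<Longrightarrow> y \<in> Fq q \<Longrightarrow> x * y \<in> Fq q"
  by (simp add: Fq_def power_mult_distrib)
lemma Tr_Fq: "Tr q (x::'a) \<in> Fq q"
  by (simp add: Fq_def Tr_def fadd fq2)
lemma Tr_add: "Tr q (x + y::'a) = Tr q x + Tr q y"
  by (simp add: Tr_def fadd)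
lemma Tr_diff: "Tr q (x - y::'a) = Tr q x - Tr q y"
  by (simp add: Tr_def fdiff)
lemma Tr_0[simp]: "Tr q (0::'a) = 0" by (simp add: Tr_def)
lemma Tr_smult: "c \<in> Fq q \<Longrightarrow> Tr q (c * x::'a) = c * Tr q x"
  by (simp add: Tr_def Fq_def power_mult_distrib distrib_left)
lemma Tr_sum: "Tr q (\<Sum>j\<in>A. f j::'a) = (\<Sum>j\<in>A. Tr q (f j))"
  by (simp add: Tr_def fsum sum.distrib)
lemma Tr_conj: "Tr q (x ^ q::'a) = Tr q x"
  by (simp add: Tr_def fq2)

lemma coord_inj:
  assumes "Tr q (b * a) = 0" "Tr q (b ^ q * a) = 0"
  shows "a = 0"
proof -
  have e1: "b * a + b ^ q * a ^ q = 0" using assms(1) by (simp add: Tr_def power_mult_distrib)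
  have e2: "b ^ q * a + b * a ^ q = 0" using assms(2) by (simp add: Tr_def power_mult_distrib fq2)
  have "b * (b * a + b ^ q * a ^ q) - b ^ q * (b ^ q * a + b * a ^ q) = (b ^ 2 - b ^ (2 * q)) * a"
  proof -
    have bb: "b ^ (2 * q) = b ^ q * b ^ q" by (simp add: mult_2 power_add)
    show ?thesis unfolding bb power2_eq_square by (simp add: algebra_simps)
  qed
  then have "(b ^ 2 - b ^ (2 * q)) * a = 0"
    by (subst (asm) e1, subst (asm) e2) simp
  moreover have "b ^ 2 - b ^ (2 * q) \<noteq> 0" using bne by simp
  ultimately show ?thesis by (metis mult_eq_0_iff)
qed

lemma coord_surj:
  assumes "s \<in> Fq q" "t \<in> Fq q"
  shows "\<exists>a. Tr q (b * a) = s \<and> Tr q (b ^ q * a) = t"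
proof -
  define f where "f = (\<lambda>a::'a. (Tr q (b * a), Tr q (b ^ q * a)))"
  have inj: "inj f"
  proof (rule injI)
    fix x y assume "f x = f y"
    then have "Tr q (b * (x - y)) = 0" "Tr q (b ^ q * (x - y)) = 0"
      by (simp_all add: f_def right_diff_distrib Tr_diff)
    then show "x = y" using coord_inj[of "x - y"] by simp
  qed
  have fin: "finite (Fq q :: 'a set)" by simp
  have cF: "card (Fq q :: 'a set) \<le> q"
  proof -
    let ?p = "monom (1::'a) q + [:0, -1:]"
    have dp: "degree ?p = q"
      using q2 by (subst degree_add_eq_left) (auto simp: degree_monom_eq)
    then have "?p \<noteq> 0" using q2 by auto
    moreover have "Fq q = {x. poly ?p x = 0}" by (auto simp: Fq_def poly_monom)
    ultimately show ?thesis using card_poly_roots_bound[of ?p] dp by simp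
  qed
  have sub: "range f \<subseteq> Fq q \<times> Fq q" by (auto simp: f_def Tr_Fq)
  have "card (Fq q \<times> Fq q :: ('a \<times> 'a) set) \<le> q ^ 2"
    using cF by (simp add: card_cartesian_product power2_eq_square mult_le_mono)
  also have "q ^ 2 = card (range f)" using inj cardU by (simp add: card_image)
  finally have "range f = Fq q \<times> Fq q"
    using card_seteq[OF _ sub] by simp
  then have "(s, t) \<in> range f" using assms by simp
  then show ?thesis by (auto simp: f_def)
qed

end

definition csh :: "nat \<Rightarrow> (nat \<Rightarrow> 'a::zero) \<Rightarrow> nat \<Rightarrow> 'a" where
  "csh m v = (\<lambda>i. if i = 0 then v (m - 1) else if i < m then v (i - 1) else 0)"

context frobset begin

lemma Psi_sum:
  assumes "\<forall>j<m. c j \<in> Fq q"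
  shows "Psi q b n (\<lambda>i. \<Sum>j<m. c j * u j i) = (\<lambda>i. \<Sum>j<m. c j * Psi q b n (u j) i)"
proof
  fix i
  have A: "Tr q (x * (\<Sum>j<m. c j * u j l)) = (\<Sum>j<m. c j * Tr q (x * u j l))" for x l
  proof -
    have "Tr q (x * (\<Sum>j<m. c j * u j l)) = Tr q (\<Sum>j<m. c j * (x * u j l))"
      by (simp add: sum_distrib_left mult_ac)
    also have "\<dots> = (\<Sum>j<m. Tr q (c j * (x * u j l)))" by (rule Tr_sum)
    also have "\<dots> = (\<Sum>j<m. c j * Tr q (x * u j l))"
      using assms by (intro sum.cong) (auto simp: Tr_smult)
    finally show ?thesis .
  qed
  show "Psi q b n (\<lambda>i. \<Sum>j<m. c j * u j i) i = (\<Sum>j<m. c j * Psi q b n (u j) i)"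
    unfolding Psi_def using A by simp
qed

lemma Psi_zero: "Psi q b n (\<lambda>i. 0) = (\<lambda>i. 0)"
  by (auto simp: Psi_def)

lemma Psi_vecs: "Psi q b n a \<in> vecs (2 * n)"
  by (auto simp: Psi_def vecs_def)

lemma Psi_Fq: "Psi q b n a i \<in> Fq q"
  by (auto simp: Psi_def Tr_Fq)

lemma Psi_inj:
  assumes "a \<in> vecs n" "a' \<in> vecs n" "Psi q b n a = Psi q b n a'"
  shows "a = a'"
proof
  fix i
  show "a i = a' i"
  proof (cases "i < n")
    case True
    have "Psi q b n a i = Psi q b n a' i" "Psi q b n a (i + n) = Psi q b n a' (i + n)"
      using assms(3) by simp_all
    then have "Tr q (b * a i) = Tr q (b * a' i)" "Tr q (b ^ q * a i) = Tr q (b ^ q * a' i)"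
      using True by (simp_all add: Psi_def)
    then have "Tr q (b * (a i - a' i)) = 0" "Tr q (b ^ q * (a i - a' i)) = 0"
      by (simp_all add: right_diff_distrib Tr_diff)
    then show ?thesis using coord_inj[of "a i - a' i"] by simp
  next
    case False then show ?thesis using assms(1,2) by (simp add: vecs_def)
  qed
qed

lemma Psi_shift:
  assumes "n > 0"
  shows "Psi q b n (conjshift q n c) = csh (2 * n) (Psi q b n c)"
proof
  fix i
  have k1: "Tr q (b * y ^ q) = Tr q (b ^ q * y)" for y
  proof -
    have "b * y ^ q = (b ^ q * y) ^ q" by (simp add: power_mult_distrib fq2)
    then show ?thesis by (simp add: Tr_conj)
  qed
  have k2: "Tr q (b ^ q * y ^ q) = Tr q (b * y)" for y
  proof -
    have "b ^ q * y ^ q = (b * y) ^ q" by (simp add: power_mult_distrib)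
    then show ?thesis by (simp add: Tr_conj)
  qed
  show "Psi q b n (conjshift q n c) i = csh (2 * n) (Psi q b n c) i"
  proof -
    consider "i = 0" | "0 < i" "i < n" | "i = n" | "n < i" "i < 2 * n" | "2 * n \<le> i" by linarith
    then show ?thesis
    proof cases
      case 1
      have "\<not> 2 * n - 1 < n" "2 * n - 1 - n = n - 1" using assms by auto
      with 1 show ?thesis using assms
        by (simp add: Psi_def conjshift_def csh_def k1)
    next
      case 2
      then have "i - 1 < n" by simp
      with 2 show ?thesis using assms
        by (simp add: Psi_def conjshift_def csh_def)
    next
      case 3 then show ?thesis using assms
        by (simp add: Psi_def conjshift_def csh_def k2)
    next
      case 4
      then have "i - n < n" "i - 1 < 2 * n" "\<not> i - 1 < n" "i - n \<noteq> 0" "i - 1 - n = i - n - 1" "i \<noteq> n" by auto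
      with 4 show ?thesis using assms
        by (simp add: Psi_def conjshift_def csh_def)
    next
      case 5 then show ?thesis using assms
        by (simp add: Psi_def conjshift_def csh_def)
    qed
  qed
qed

lemma shift_vecs: "c \<in> vecs n \<Longrightarrow> (conjshift q n ^^ j) c \<in> vecs n"
  using q2 by (induction j) (auto simp: vecs_def conjshift_def)

lemma Psi_shift_pow:
  assumes "n > 0"
  shows "Psi q b n ((conjshift q n ^^ j) c) = (csh (2 * n) ^^ j) (Psi q b n c)"
  by (induction j) (simp_all add: Psi_shift[OF assms])

definition pfrob :: "'a poly \<Rightarrow> 'a poly" where
  "pfrob p = map_poly (\<lambda>x. x ^ q) p"

lemma coeff_pfrob: "coeff (pfrob p) i = coeff p i ^ q"
  by (simp add: pfrob_def coeff_map_poly)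

lemma pfrob_mult: "pfrob (p * r) = pfrob p * pfrob r"
proof (rule poly_eqI)
  fix i
  show "coeff (pfrob (p * r)) i = coeff (pfrob p * pfrob r) i"
    by (simp add: coeff_pfrob coeff_mult fsum power_mult_distrib)
qed

lemma pfrob_id: "p \<in> Fq_poly q \<longleftrightarrow> pfrob p = p"
  by (auto simp: Fq_poly_def Fq_def coeff_pfrob intro: poly_eqI dest: arg_cong[where f="\<lambda>p. coeff p _"])

end

lemma coeff_vec_poly: "coeff (vec_poly M v) i = (if i < M then v i else 0)"
  by (simp add: vec_poly_def coeff_sum coeff_monom)

lemma vec_poly_coeff: "degree P < M \<Longrightarrow> vec_poly M (coeff P) = P"
  by (rule poly_eqI) (auto simp: coeff_vec_poly coeff_eq_0)

lemma degree_xm1: "N > 0 \<Longrightarrow> degree (xm1 N :: 'a::field poly) = N"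
proof -
  assume N: "N > 0"
  have "xm1 N = monom (1::'a) N + [:-1:]" by (simp add: xm1_def one_pCons)
  also have "degree \<dots> = N" using N by (subst degree_add_eq_left) (auto simp: degree_monom_eq)
  finally show ?thesis .
qed

lemma lead_xm1: "N > 0 \<Longrightarrow> lead_coeff (xm1 N :: 'a::field poly) = 1"
  by (simp add: degree_xm1) (simp add: xm1_def)

context frobset begin

lemma main:
  assumes n: "n > 0" and gF: "g \<in> Fq_poly q" and gl: "lead_coeff g = 1"
    and hF: "h \<in> Fq_poly q" and gh: "xm1 (2 * n) = g * h" and gne: "g \<noteq> xm1 (2 * n)"
  shows "Fq_indep q (2 * n - degree g) (\<lambda>j. (conjshift q n ^^ j) (Wg q b n g))
       \<and> Fq_span q (2 * n - degree g) (\<lambda>j. (conjshift q n ^^ j) (Wg q b n g))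
           = conj_code q b n g"
proof -
  define k where "k = degree g"
  define m where "m = 2 * n - k"
  have dx: "degree (xm1 (2 * n) :: 'a poly) = 2 * n" using n by (simp add: degree_xm1)
  have xne: "xm1 (2 * n) \<noteq> (0 :: 'a poly)" using dx n by auto
  have g0: "g \<noteq> 0" using gl by auto
  have h0: "h \<noteq> 0" using xne gh by auto
  have dgh: "k + degree h = 2 * n" using dx gh g0 h0 by (simp add: degree_mult_eq k_def)
  have dh: "degree h > 0"
  proof (rule ccontr)
    assume "\<not> degree h > 0"
    then have d0: "degree h = 0" by simp
    have "lead_coeff (xm1 (2 * n) :: 'a poly) = 1" using n by (simp add: lead_xm1)
    then have "lead_coeff h = 1" using gh gl by (simp add: lead_coeff_mult)
    then have "h = 1" using d0 by (metis degree0_coeffs lead_coeff_pCons(2) pCons_one degree_pCons_0)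
    then show False using gh gne by simp
  qed
  have mdef: "m = degree h" using dgh by (simp add: m_def)
  have m0: "m > 0" using dh mdef by simp
  have k2n: "k < 2 * n" using dgh dh by simp
  define W where "W = Wg q b n g"
  define V where "V = Vg (2 * n) g"
  have VF: "V i \<in> Fq q" for i using gF by (simp add: V_def Vg_def Fq_poly_def)
  have Wspec: "W \<in> vecs n \<and> Psi q b n W = V"
  proof -
    define w where "w = (\<lambda>i. if i < n then (SOME a. Tr q (b * a) = V i \<and> Tr q (b ^ q * a) = V (i + n)) else 0)"
    have ex: "w \<in> vecs n \<and> Psi q b n w = V"
    proof
      show "w \<in> vecs n" by (simp add: w_def vecs_def)
      show "Psi q b n w = V"
      proof
        fix i
        have sp: "Tr q (b * w l) = V l \<and> Tr q (b ^ q * w l) = V (l + n)" if "l < n" for l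
          using someI_ex[OF coord_surj[OF VF VF, of l "l + n"]] that by (simp add: w_def)
        show "Psi q b n w i = V i"
        proof (cases "i < 2 * n")
          case True
          then show ?thesis using sp[of i] sp[of "i - n"] by (auto simp: Psi_def)
        next
          case False then show ?thesis by (simp add: Psi_def V_def Vg_def)
        qed
      qed
    qed
    have "\<exists>!w. w \<in> vecs n \<and> Psi q b n w = V"
      using ex Psi_inj by blast
    from theI'[OF this] show ?thesis unfolding W_def Wg_def V_def .
  qed
  have Wv: "W \<in> vecs n" and PW: "Psi q b n W = V" using Wspec by auto
  have SH: "j < m \<Longrightarrow> (csh (2 * n) ^^ j) V = (\<lambda>i. if i < 2 * n \<and> j \<le> i then coeff g (i - j) else 0)" for j
  proof (induction j)
    case 0 then show ?case by (simp add: V_def Vg_def fun_eq_iff)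
  next
    case (Suc j)
    then have IH: "(csh (2 * n) ^^ j) V = (\<lambda>i. if i < 2 * n \<and> j \<le> i then coeff g (i - j) else 0)" by simp
    show ?case
    proof
      fix i
      show "(csh (2 * n) ^^ Suc j) V i = (if i < 2 * n \<and> Suc j \<le> i then coeff g (i - Suc j) else 0)"
      proof -
        consider "i = 0" | "0 < i" "i < 2 * n" | "2 * n \<le> i" by linarith
        then show ?thesis
        proof cases
          case 1
          have "coeff g (2 * n - 1 - j) = 0" using Suc.prems by (intro coeff_eq_0) (simp add: m_def k_def)
          then show ?thesis using 1 by (simp add: IH csh_def)
        next
          case 2
          then have "i - 1 < 2 * n" "(j \<le> i - 1) = (Suc j \<le> i)" "i - 1 - j = i - Suc j" by auto
          then show ?thesis using 2 by (simp add: IH csh_def)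
        next
          case 3 then show ?thesis by (simp add: IH csh_def)
        qed
      qed
    qed
  qed
  define S where "S c = (\<lambda>i. \<Sum>j<m. c j * (conjshift q n ^^ j) W i)" for c
  define Pc where "Pc c = (\<Sum>j<m. monom (c j) j)" for c :: "nat \<Rightarrow> 'a"
  have coeff_Pc: "coeff (Pc c) i = (if i < m then c i else 0)" for c i
    by (simp add: Pc_def coeff_sum coeff_monom)
  have KEY: "Psi q b n (S c) = (\<lambda>i. coeff (Pc c * g) i)" if cF: "\<forall>j<m. c j \<in> Fq q" for c
  proof
    fix i
    have "Psi q b n (S c) i = (\<Sum>j<m. c j * Psi q b n ((conjshift q n ^^ j) W) i)"
      unfolding S_def using Psi_sum[OF cF] by simp
    also have "\<dots> = (\<Sum>j<m. c j * (if i < 2 * n \<and> j \<le> i then coeff g (i - j) else 0))"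
      by (intro sum.cong refl) (simp add: Psi_shift_pow[OF n] PW SH)
    also have "\<dots> = (\<Sum>j<m. coeff (monom (c j) j * g) i)"
    proof (intro sum.cong refl)
      fix j assume "j \<in> {..<m}"
      then have "j < m" by simp
      then have "2 * n \<le> i \<Longrightarrow> coeff g (i - j) = 0" by (intro coeff_eq_0) (simp add: m_def k_def)
      then show "c j * (if i < 2 * n \<and> j \<le> i then coeff g (i - j) else 0) = coeff (monom (c j) j * g) i"
        by (auto simp: coeff_monom_mult)
    qed
    also have "\<dots> = coeff (Pc c * g) i"
      by (simp add: Pc_def sum_distrib_right coeff_sum)
    finally show "Psi q b n (S c) i = coeff (Pc c * g) i" .
  qed
  have Sv: "S c \<in> vecs n" for c
    using shift_vecs[OF Wv] by (simp add: S_def vecs_def)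
  have indep: "Fq_indep q m (\<lambda>j. (conjshift q n ^^ j) W)"
    unfolding Fq_indep_def
  proof (rule allI, rule impI)
    fix c assume H: "(\<forall>j<m. c j \<in> Fq q) \<and> (\<lambda>i. \<Sum>j<m. c j * (conjshift q n ^^ j) W i) = (\<lambda>i. 0)"
    then have "S c = (\<lambda>i. 0)" by (simp add: S_def)
    then have "(\<lambda>i. coeff (Pc c * g) i) = (\<lambda>i. 0)" using KEY[of c] H Psi_zero by simp
    then have "Pc c * g = 0" by (intro poly_eqI) (simp add: fun_eq_iff)
    then have "Pc c = 0" using g0 by simp
    then show "\<forall>j<m. c j = 0" using coeff_Pc by (metis coeff_0)
  qed
  have sub1: "Fq_span q m (\<lambda>j. (conjshift q n ^^ j) W) \<subseteq> conj_code q b n g"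
  proof
    fix x assume "x \<in> Fq_span q m (\<lambda>j. (conjshift q n ^^ j) W)"
    then obtain c where cF: "\<forall>j<m. c j \<in> Fq q" and x: "x = S c"
      by (auto simp: Fq_span_def S_def)
    have PcF: "Pc c \<in> Fq_poly q" using cF by (simp add: Fq_poly_def coeff_Pc)
    have "degree (Pc c) \<le> m - 1" by (rule degree_le) (auto simp: coeff_Pc)
    then have "degree (Pc c * g) < 2 * n"
      using degree_mult_le[of "Pc c" g] m0 by (simp add: m_def k_def)
    then have e: "vec_poly (2 * n) (Psi q b n x) = (Pc c * g) mod xm1 (2 * n)"
      using KEY[OF cF] x dx by (simp add: vec_poly_coeff mod_poly_less)
    show "x \<in> conj_code q b n g"
      unfolding conj_code_def cyclic_code_def
      using Sv x Psi_vecs Psi_Fq e PcF by blast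
  qed
  have sub2: "conj_code q b n g \<subseteq> Fq_span q m (\<lambda>j. (conjshift q n ^^ j) W)"
  proof
    fix a assume "a \<in> conj_code q b n g"
    then obtain p where av: "a \<in> vecs n" and pF: "p \<in> Fq_poly q"
      and pe: "vec_poly (2 * n) (Psi q b n a) = (p * g) mod xm1 (2 * n)"
      by (auto simp: conj_code_def cyclic_code_def)
    define r where "r = p mod h"
    have "p * g = r * g + (p div h) * xm1 (2 * n)"
    proof -
      have "p = p div h * h + r" by (simp add: r_def)
      then have "p * g = (p div h * h + r) * g" by simp
      then show ?thesis using gh by (simp add: algebra_simps)
    qed
    then have "(p * g) mod xm1 (2 * n) = (r * g) mod xm1 (2 * n)" by (simp add: mod_mult_self1)
    moreover have dr: "r = 0 \<or> degree r < m"
      using degree_mod_less[OF h0, of p] mdef by (auto simp: r_def)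
    moreover have "degree (r * g) < 2 * n"
    proof (cases "r = 0")
      case True then show ?thesis using n by simp
    next
      case False
      then have "degree (r * g) = degree r + k" using g0 by (simp add: degree_mult_eq k_def)
      then show ?thesis using dr False by (simp add: m_def)
    qed
    ultimately have pe2: "vec_poly (2 * n) (Psi q b n a) = r * g" using pe dx by (simp add: mod_poly_less)
    have Pa: "Psi q b n a = (\<lambda>i. coeff (r * g) i)"
    proof
      fix i
      show "Psi q b n a i = coeff (r * g) i"
        using Psi_vecs[of n a] by (simp add: pe2[symmetric] coeff_vec_poly vecs_def)
    qed
    have "r * g \<in> Fq_poly q" using Pa Psi_Fq by (simp add: Fq_poly_def) (metis Psi_Fq)
    then have "pfrob (r * g) = r * g" by (simp add: pfrob_id)
    moreover have "pfrob g = g" using gF by (simp add: pfrob_id)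
    ultimately have "pfrob r * g = r * g" by (simp add: pfrob_mult)
    then have "pfrob r = r" using g0 by simp
    then have rF: "r \<in> Fq_poly q" by (simp add: pfrob_id)
    define c where "c = coeff r"
    have cF: "\<forall>j<m. c j \<in> Fq q" using rF by (simp add: c_def Fq_poly_def)
    have "Pc c = r"
    proof (rule poly_eqI)
      fix i show "coeff (Pc c) i = coeff r i"
        using dr by (auto simp: coeff_Pc c_def intro: coeff_eq_0)
    qed
    then have "Psi q b n (S c) = Psi q b n a" using KEY[OF cF] Pa by simp
    then have "a = S c" using Psi_inj[OF Sv av] by metis
    then show "a \<in> Fq_span q m (\<lambda>j. (conjshift q n ^^ j) W)"
      using cF by (auto simp: Fq_span_def S_def)
  qed
  show ?thesis using indep sub1 sub2 by (simp add: m_def k_def W_def)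
qed

end

theorem theorem4p3:
  fixes q n :: nat and b :: "'a::{finite,field}" and g :: "'a poly"
  assumes "\<exists>p e. prime p \<and> e > 0 \<and> q = p ^ e"
    and "card (UNIV :: 'a set) = q ^ 2"
    and "primitive_elem b"
    and "n > 0"
    and "g \<in> Fq_poly q" and "lead_coeff g = 1"
    and "\<exists>h \<in> Fq_poly q. xm1 (2 * n) = g * h"
    and "g \<noteq> xm1 (2 * n)"
  shows "Fq_indep q (2 * n - degree g) (\<lambda>j. (conjshift q n ^^ j) (Wg q b n g))
       \<and> Fq_span q (2 * n - degree g) (\<lambda>j. (conjshift q n ^^ j) (Wg q b n g))
           = conj_code q b n g"
proof -
  obtain p e where pe: "prime p" "e > 0" "q = p ^ e" using assms(1) by blast
  have q2: "q \<ge> 2"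
  proof -
    have "p \<ge> 2" using pe(1) prime_ge_2_nat by blast
    moreover have "p \<le> p ^ e" using pe(1,2) prime_ge_1_nat self_le_power by blast
    ultimately show ?thesis using pe(3) by simp
  qed
  have fadd: "(x + y) ^ q = x ^ q + y ^ q" for x y :: 'a
    using frob_add_gen[OF pe assms(2)] .
  have fq2: "(x ^ q) ^ q = x" for x :: 'a
    using pow_card_same[of x] assms(2) by (simp add: power_mult[symmetric] power2_eq_square)
  have bnz: "b \<noteq> 0" using assms(3) by (simp add: primitive_elem_def)
  have bne: "b ^ 2 \<noteq> b ^ (2 * q)"
  proof
    assume eq: "b ^ 2 = b ^ (2 * q)"
    define N where "N = 2 * q - 2"
    have N2: "N \<ge> 2" using q2 by (simp add: N_def)
    have "2 * q = N + 2" using q2 by (simp add: N_def)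
    then have "b ^ (2 * q) = b ^ N * b ^ 2" by (simp only: power_add)
    then have bN: "b ^ N = 1" using eq bnz by simp
    have "x ^ N = 1" if xnz: "x \<noteq> 0" for x :: 'a
    proof -
      obtain j where "x = b ^ j" using assms(3) xnz unfolding primitive_elem_def by blast
      then show ?thesis using bN by (simp flip: power_mult) (simp add: mult.commute power_mult)
    qed
    then have sub: "UNIV - {0} \<subseteq> {x. poly (monom (1::'a) N + [:-1:]) x = 0}"
      by (auto simp: poly_monom)
    have dp: "degree (monom (1::'a) N + [:-1:]) = N"
      using N2 by (subst degree_add_eq_left) (auto simp: degree_monom_eq)
    then have nz: "monom (1::'a) N + [:-1:] \<noteq> 0" using N2 by auto
    have "card (UNIV - {0::'a}) \<le> N"
      using card_mono[OF poly_roots_finite[OF nz] sub] card_poly_roots_bound[OF nz] dp by simp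
    then have "q ^ 2 - 1 \<le> 2 * q - 2" using assms(2) by (simp add: card_Diff_singleton N_def)
    moreover have "q ^ 2 \<ge> 2 * q" using q2 by (simp add: power2_eq_square)
    ultimately show False using q2 by linarith
  qed
  interpret F: frobset q b
    using q2 fadd fq2 bne assms(2) by unfold_locales auto
  obtain h where "h \<in> Fq_poly q" "xm1 (2 * n) = g * h" using assms(7) by blast
  then show ?thesis using F.main assms by blast
qed

end
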